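(* Let $G$ be a finite group with $|G|\equiv 3 \pmod 6$, $G'\cong C_5\times C_5$ and $G'\cap Z(G)=\{1\}$. Then (1) $|\mathrm{Cl}_G(x)|=3$ for all $x\in G'\setminus Z(G)$, and (2) $|G/C_G(G')|=3$.
   Context: $G'$ is the commutator subgroup, $Z(G)$ the center, $C_G(G')$ the centralizer of $G'$ in $G$, $\mathrm{Cl}_G(x)$ the conjugacy class of $x$, $C_5$ the cyclic group of order $5$. *)

theory Defs
  imports "HOL-Algebra.Algebra"
begin

definition center :: "('a, 'b) monoid_scheme \<Rightarrow> 'a set" where
  "center G = {z \<in> carrier G. \<forall>g \<in> carrier G. z \<otimes>\<^bsub>G\<^esub> g = g \<otimes>\<^bsub>G\<^esub> z}"

definition centralizer :: "('a, 'b) monoid_scheme \<Rightarrow> 'a set \<Rightarrow> 'a set" where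
  "centralizer G H = {g \<in> carrier G. \<forall>h \<in> H. g \<otimes>\<^bsub>G\<^esub> h = h \<otimes>\<^bsub>G\<^esub> g}"

definition conj_class :: "('a, 'b) monoid_scheme \<Rightarrow> 'a \<Rightarrow> 'a set" where
  "conj_class G x = {g \<otimes>\<^bsub>G\<^esub> x \<otimes>\<^bsub>G\<^esub> inv\<^bsub>G\<^esub> g | g. g \<in> carrier G}"

end

theory Submission
  imports Defs "HOL-Computational_Algebra.Primes"
begin

lemma dvd25_cases: "(d::nat) dvd 25 \<Longrightarrow> d = 1 \<or> d = 5 \<or> d = 25"
proof -
  have p5: "Factorial_Ring.prime (5::nat)" by simp
  assume h: "d dvd 25"
  hence "d dvd 5^2" by simp
  then obtain i where "i \<le> 2" "d = 5^i" using divides_primepow_nat[OF p5] by blast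
  then show ?thesis by (auto simp: le_Suc_eq numeral_2_eq_2)
qed

lemma odd24: "(k::nat) * m = 24 \<Longrightarrow> odd k \<Longrightarrow> k \<ge> 2 \<Longrightarrow> k = 3"
proof -
  have p3: "Factorial_Ring.prime (3::nat)" by simp
  assume h: "k * m = 24" "odd k" "k \<ge> 2"
  have "k dvd 24" using dvd_triv_left[of k m] h(1) by simp
  hence "k dvd 8 * 3" by simp
  moreover have "coprime k 2" using h(2) by (simp add: coprime_right_2_iff_odd)
  hence "coprime k (2^3)" by (simp add: coprime_power_right_iff del: power_numeral)
  hence "coprime k 8" by simp
  ultimately have "k dvd 3" using coprime_dvd_mult_right_iff by blast
  then obtain i where "i \<le> 1" "k = 3^i" using divides_primepow_nat[OF p3, of k 1] by auto
  then show ?thesis using h by (auto simp: le_Suc_eq)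
qed

context group begin

lemma cancel1: "x \<in> carrier G \<Longrightarrow> y \<in> carrier G \<Longrightarrow> x \<otimes> (inv x \<otimes> y) = y"
  by (simp add: m_assoc[symmetric])

lemma cancel2: "x \<in> carrier G \<Longrightarrow> y \<in> carrier G \<Longrightarrow> inv x \<otimes> (x \<otimes> y) = y"
  by (simp add: m_assoc[symmetric])

lemma comm_conj:
  assumes a: "a \<in> carrier G" and b: "b \<in> carrier G" and h: "h \<in> carrier G" and ab: "a \<otimes> b = b \<otimes> a"
  shows "(h \<otimes> a \<otimes> inv h) \<otimes> (h \<otimes> b \<otimes> inv h) = (h \<otimes> b \<otimes> inv h) \<otimes> (h \<otimes> a \<otimes> inv h)"
proof -
  have "(h \<otimes> a \<otimes> inv h) \<otimes> (h \<otimes> b \<otimes> inv h) = h \<otimes> (a \<otimes> b) \<otimes> inv h"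
    using a b h by (simp add: m_assoc cancel2)
  also have "\<dots> = h \<otimes> (b \<otimes> a) \<otimes> inv h" using ab by simp
  also have "\<dots> = (h \<otimes> b \<otimes> inv h) \<otimes> (h \<otimes> a \<otimes> inv h)"
    using a b h by (simp add: m_assoc cancel2)
  finally show ?thesis .
qed

lemma conj_fix_iff:
  assumes "g \<in> carrier G" "x \<in> carrier G"
  shows "g \<otimes> x \<otimes> inv g = x \<longleftrightarrow> g \<otimes> x = x \<otimes> g"
proof
  assume "g \<otimes> x \<otimes> inv g = x"
  hence "g \<otimes> x \<otimes> inv g \<otimes> g = x \<otimes> g" by simp
  thus "g \<otimes> x = x \<otimes> g" using assms by (simp add: m_assoc)
next
  assume "g \<otimes> x = x \<otimes> g"
  thus "g \<otimes> x \<otimes> inv g = x" using assms by (simp add: m_assoc)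
qed

lemma conj_class_orbit:
  assumes "x \<in> carrier G"
  shows "conj_class G x = orbit G (\<lambda>g. (\<lambda>h \<in> carrier G. g \<otimes> h \<otimes> inv g)) x"
  using assms unfolding conj_class_def orbit_def by auto

lemma stab_centralizer:
  assumes "x \<in> carrier G"
  shows "stabilizer G (\<lambda>g. (\<lambda>h \<in> carrier G. g \<otimes> h \<otimes> inv g)) x = centralizer G {x}"
  using assms conj_fix_iff unfolding stabilizer_def centralizer_def by auto

lemma class_card:
  assumes "x \<in> carrier G"
  shows "card (conj_class G x) * card (centralizer G {x}) = order G"
  using group_action.orbit_stabilizer_theorem[OF action_by_conjugation assms]
    conj_class_orbit[OF assms] stab_centralizer[OF assms] by simp

lemma centralizer_subgroup:
  assumes "H \<subseteq> carrier G"
  shows "subgroup (centralizer G H) G"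
proof (rule subgroupI)
  show "centralizer G H \<subseteq> carrier G" by (auto simp: centralizer_def)
  have "\<one> \<in> centralizer G H" using assms by (auto simp: centralizer_def)
  thus "centralizer G H \<noteq> {}" by blast
next
  fix g assume g: "g \<in> centralizer G H"
  show "inv g \<in> centralizer G H"
    unfolding centralizer_def
  proof (safe)
    show "inv g \<in> carrier G" using g by (auto simp: centralizer_def)
    fix h assume h: "h \<in> H"
    have gc: "g \<in> carrier G" and hc: "h \<in> carrier G" and e: "g \<otimes> h = h \<otimes> g"
      using g h assms by (auto simp: centralizer_def)
    have "inv g \<otimes> h = inv g \<otimes> (h \<otimes> g) \<otimes> inv g" using gc hc by (simp add: m_assoc)
    also have "\<dots> = inv g \<otimes> (g \<otimes> h) \<otimes> inv g" using e by simp
    also have "\<dots> = h \<otimes> inv g" using gc hc by (simp add: m_assoc[symmetric])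
    finally show "inv g \<otimes> h = h \<otimes> inv g" .
  qed
next
  fix g k assume g: "g \<in> centralizer G H" and k: "k \<in> centralizer G H"
  show "g \<otimes> k \<in> centralizer G H"
    unfolding centralizer_def
  proof (safe)
    show "g \<otimes> k \<in> carrier G" using g k by (auto simp: centralizer_def)
    fix h assume h: "h \<in> H"
    have gc: "g \<in> carrier G" and kc: "k \<in> carrier G" and hc: "h \<in> carrier G"
      and e1: "g \<otimes> h = h \<otimes> g" and e2: "k \<otimes> h = h \<otimes> k"
      using g k h assms by (auto simp: centralizer_def)
    have "g \<otimes> k \<otimes> h = g \<otimes> (k \<otimes> h)" using gc kc hc by (simp add: m_assoc)
    also have "\<dots> = (g \<otimes> h) \<otimes> k" using e2 gc kc hc by (simp add: m_assoc)
    also have "\<dots> = h \<otimes> (g \<otimes> k)" using e1 gc kc hc by (simp add: m_assoc)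
    finally show "g \<otimes> k \<otimes> h = h \<otimes> (g \<otimes> k)" .
  qed
qed

lemma self_in_conj_class: "x \<in> carrier G \<Longrightarrow> x \<in> conj_class G x"
  unfolding conj_class_def by (rule CollectI, rule exI[of _ \<one>]) simp

lemma conj_class_subset: "x \<in> carrier G \<Longrightarrow> conj_class G x \<subseteq> carrier G"
  unfolding conj_class_def by auto

lemma conj_class_trans:
  assumes x: "x \<in> carrier G" and y: "y \<in> conj_class G x"
  shows "conj_class G y \<subseteq> conj_class G x"
proof
  obtain a where a: "a \<in> carrier G" and ya: "y = a \<otimes> x \<otimes> inv a"
    using y unfolding conj_class_def by auto
  fix z assume "z \<in> conj_class G y"
  then obtain g where g: "g \<in> carrier G" and z: "z = g \<otimes> y \<otimes> inv g"
    unfolding conj_class_def by auto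
  have "z = (g \<otimes> a) \<otimes> x \<otimes> inv (g \<otimes> a)"
    using a g x by (simp add: z ya inv_mult_group m_assoc)
  thus "z \<in> conj_class G x" using a g unfolding conj_class_def by blast
qed

lemma conj_class_sym:
  assumes x: "x \<in> carrier G" and y: "y \<in> conj_class G x"
  shows "x \<in> conj_class G y"
proof -
  obtain a where a: "a \<in> carrier G" and ya: "y = a \<otimes> x \<otimes> inv a"
    using y unfolding conj_class_def by auto
  have "x = inv a \<otimes> y \<otimes> inv (inv a)"
    using a x by (simp add: ya m_assoc) (simp add: m_assoc[symmetric])
  thus ?thesis using a unfolding conj_class_def by blast
qed

lemma conj_class_eq:
  assumes x: "x \<in> carrier G" and y: "y \<in> conj_class G x"
  shows "conj_class G y = conj_class G x"
proof
  show "conj_class G y \<subseteq> conj_class G x" by (rule conj_class_trans[OF x y])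
  have yc: "y \<in> carrier G" using conj_class_subset[OF x] y by auto
  show "conj_class G x \<subseteq> conj_class G y"
    by (rule conj_class_trans[OF yc conj_class_sym[OF x y]])
qed

lemma conj_class_disj:
  assumes x: "x \<in> carrier G" and y: "y \<in> carrier G" and n: "y \<notin> conj_class G x"
  shows "conj_class G x \<inter> conj_class G y = {}"
proof (rule ccontr)
  assume "conj_class G x \<inter> conj_class G y \<noteq> {}"
  then obtain z where z1: "z \<in> conj_class G x" and z2: "z \<in> conj_class G y" by auto
  have "conj_class G x = conj_class G z" using conj_class_eq[OF x z1] by simp
  also have "\<dots> = conj_class G y" using conj_class_eq[OF y z2] .
  finally show False using n self_in_conj_class[OF y] by simp
qed

end

lemma (in group) main_aux:
  assumes "finite (carrier G)"
    and "order G mod 6 = 3"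
    and "subgroup_generated G (derived G (carrier G)) \<cong> integer_mod_group 5 \<times>\<times> integer_mod_group 5"
    and "derived G (carrier G) \<inter> center G = {\<one>}"
  shows "(\<forall>x \<in> derived G (carrier G) - center G. card (conj_class G x) = 3)
         \<and> order (G Mod centralizer G (derived G (carrier G))) = 3"
proof -
  define V where "V = derived G (carrier G)"
  define C where "C = centralizer G V"
  have hV: "subgroup V G" unfolding V_def by (rule derived_is_subgroup) simp
  have Vc: "V \<subseteq> carrier G" using hV subgroup.subset by blast
  have hC: "subgroup C G" unfolding C_def by (rule centralizer_subgroup[OF Vc])
  have fin: "finite (carrier G)" by fact
  have finV: "finite V" using Vc fin finite_subset by blast
  have oddG: "odd (order G)"
  proof
    assume "even (order G)"
    then obtain m where "order G = 2 * m" by blast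
    thus False using assms(2) by presburger
  qed
  have ZV: "V \<inter> center G = {\<one>}" using assms(4) unfolding V_def .
  have comm_in: "g \<otimes> h \<otimes> inv g \<otimes> inv h \<in> V" if "g \<in> carrier G" "h \<in> carrier G" for g h
    unfolding V_def derived_def using that by (auto intro: generate.incl)
  have conjV: "h \<otimes> v \<otimes> inv h \<in> V" if v: "v \<in> V" and h: "h \<in> carrier G" for v h
  proof -
    have vc: "v \<in> carrier G" using v Vc by blast
    have "h \<otimes> v \<otimes> inv h = (h \<otimes> v \<otimes> inv h \<otimes> inv v) \<otimes> v"
      using vc h by (simp add: m_assoc)
    also have "\<dots> \<in> V" using subgroup.m_closed[OF hV comm_in[OF h vc] v] .
    finally show ?thesis .
  qed
  obtain \<phi> where phi: "\<phi> \<in> iso (subgroup_generated G V) (integer_mod_group 5 \<times>\<times> integer_mod_group 5)"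
    using assms(3) unfolding V_def is_iso_def by blast
  have carSG: "carrier (subgroup_generated G V) = V"
    using subgroup.carrier_subgroup_generated_subgroup[OF hV] .
  have cardV: "card V = 25"
    using iso_same_card[OF assms(3)] carSG unfolding V_def
    by (simp add: carrier_integer_mod_group card_cartesian_product)
  have commV: "x \<otimes> y = y \<otimes> x" if x: "x \<in> V" and y: "y \<in> V" for x y
  proof -
    have hom: "\<phi> \<in> hom (subgroup_generated G V) (integer_mod_group 5 \<times>\<times> integer_mod_group 5)"
      and inj: "inj_on \<phi> V" and img: "\<phi> ` V = {0..<5} \<times> {0..<5}"
      using phi carSG unfolding iso_def bij_betw_def by (auto simp: carrier_integer_mod_group)
    have e1: "\<phi> (x \<otimes> y) = \<phi> x \<otimes>\<^bsub>integer_mod_group 5 \<times>\<times> integer_mod_group 5\<^esub> \<phi> y"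
      using hom x y carSG unfolding hom_def by auto
    have e2: "\<phi> (y \<otimes> x) = \<phi> y \<otimes>\<^bsub>integer_mod_group 5 \<times>\<times> integer_mod_group 5\<^esub> \<phi> x"
      using hom x y carSG unfolding hom_def by auto
    obtain a b where ab: "\<phi> x = (a, b)" by fastforce
    obtain c d where cd: "\<phi> y = (c, d)" by fastforce
    have "\<phi> (x \<otimes> y) = \<phi> (y \<otimes> x)" unfolding e1 e2 ab cd by (simp only: mult_DirProd mult_integer_mod_group add.commute)
    moreover have "x \<otimes> y \<in> V" by (rule subgroup.m_closed[OF hV x y])
    moreover have "y \<otimes> x \<in> V" by (rule subgroup.m_closed[OF hV y x])
    ultimately show ?thesis using inj by (simp add: inj_on_def)
  qed
  have sub25: "card H = 1 \<or> card H = 5 \<or> card H = 25" if "subgroup H G" "H \<subseteq> V" for H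
  proof -
    have "subgroup H (G\<lparr>carrier := V\<rparr>)" using subgroup_incl[OF that(1) hV that(2)] .
    moreover have "group (G\<lparr>carrier := V\<rparr>)" using subgroup.subgroup_is_group[OF hV] by simp
    ultimately have "card (rcosets\<^bsub>G\<lparr>carrier := V\<rparr>\<^esub> H) * card H = order (G\<lparr>carrier := V\<rparr>)"
      using group.lagrange by blast
    hence "card H dvd 25" using cardV unfolding order_def by (metis dvd_triv_right partial_object.select_convs(1) partial_object.surjective partial_object.update_convs(1))
    thus ?thesis using dvd25_cases by blast
  qed
  have cls: "card (conj_class G x) * card (centralizer G {x}) = order G" if "x \<in> carrier G" for x
    using class_card[OF that] .
  have cls_odd: "odd (card (conj_class G x))" if "x \<in> carrier G" for x
    using cls[OF that] oddG by (metis even_mult_iff)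
  have cls_ge3: "card (conj_class G x) \<ge> 3" if x: "x \<in> V" "x \<noteq> \<one>" for x
  proof -
    have xc: "x \<in> carrier G" using x Vc by blast
    have "x \<notin> center G" using ZV x by blast
    then obtain g where g: "g \<in> carrier G" "x \<otimes> g \<noteq> g \<otimes> x" using xc unfolding center_def by auto
    have "g \<otimes> x \<otimes> inv g \<noteq> x" using conj_fix_iff[OF g(1) xc] g(2) by auto
    moreover have "g \<otimes> x \<otimes> inv g \<in> conj_class G x" using g unfolding conj_class_def by blast
    moreover have "x \<in> conj_class G x" by (rule self_in_conj_class[OF xc])
    moreover have "finite (conj_class G x)" using conj_class_subset[OF xc] fin finite_subset by blast
    ultimately have "card {x, g \<otimes> x \<otimes> inv g} \<le> card (conj_class G x)"
      by (intro card_mono) auto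
    moreover have "card {x, g \<otimes> x \<otimes> inv g} = 2" using \<open>g \<otimes> x \<otimes> inv g \<noteq> x\<close> by simp
    ultimately have "card (conj_class G x) \<ge> 2" by simp
    moreover have "card (conj_class G x) \<noteq> 2" using cls_odd[OF xc] by (intro notI) simp
    ultimately show ?thesis by linarith
  qed
  have cls_in: "conj_class G x \<subseteq> V - {\<one>}" if x: "x \<in> V" "x \<noteq> \<one>" for x
  proof
    fix z assume "z \<in> conj_class G x"
    then obtain g where g: "g \<in> carrier G" and z: "z = g \<otimes> x \<otimes> inv g" unfolding conj_class_def by auto
    have xc: "x \<in> carrier G" using x Vc by blast
    have "z \<in> V" using conjV[OF x(1) g] z by simp
    moreover have "z \<noteq> \<one>"
    proof
      assume "z = \<one>"
      hence "g \<otimes> x \<otimes> inv g \<otimes> g = \<one> \<otimes> g" using z by simp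
      hence "g \<otimes> x = g \<otimes> \<one>" using g xc by (simp add: m_assoc)
      hence "x = \<one>" using g xc l_cancel one_closed by blast
      thus False using x by simp
    qed
    ultimately show "z \<in> V - {\<one>}" by simp
  qed
  have key: "V \<inter> centralizer G {g} = {\<one>}" if g: "g \<in> carrier G" "g \<notin> C" for g
  proof -
    define F where "F = V \<inter> centralizer G {g}"
    have hF: "subgroup F G" unfolding F_def
    proof -
      have "{g} \<subseteq> carrier G" using g by simp
      thus "subgroup (V \<inter> centralizer G {g}) G"
        using subgroups_Inter_pair[OF hV centralizer_subgroup[of "{g}"]] by blast
    qed
    have FV: "F \<subseteq> V" unfolding F_def by blast
    have oneF: "\<one> \<in> F" using hF subgroup.one_closed by blast
    have finF: "finite F" using FV finV finite_subset by blast
    have "card F = 1 \<or> card F = 5 \<or> card F = 25" using sub25[OF hF FV] .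
    moreover have "card F \<noteq> 25"
    proof
      assume "card F = 25"
      hence "F = V" using FV cardV finV card_subset_eq by metis
      have "\<forall>h\<in>V. g \<otimes> h = h \<otimes> g"
      proof
        fix h assume "h \<in> V"
        with \<open>F = V\<close> have "h \<in> centralizer G {g}" unfolding F_def by blast
        thus "g \<otimes> h = h \<otimes> g" unfolding centralizer_def by simp
      qed
      hence "g \<in> C" using g unfolding C_def centralizer_def by simp
      thus False using g by simp
    qed
    moreover have "card F \<noteq> 5"
    proof
      assume c5: "card F = 5"
      have Finv: "h \<otimes> v \<otimes> inv h \<in> F" if v: "v \<in> F" and h: "h \<in> carrier G" for v h
      proof -
        have vV: "v \<in> V" and vc: "v \<in> carrier G" and gv: "v \<otimes> g = g \<otimes> v"
          using v Vc unfolding F_def centralizer_def by auto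
        define g' where "g' = inv h \<otimes> g \<otimes> h"
        have g'c: "g' \<in> carrier G" unfolding g'_def using g h by simp
        define c where "c = inv g \<otimes> g'"
        have "c = inv g \<otimes> inv h \<otimes> inv (inv g) \<otimes> inv (inv h)"
          unfolding c_def g'_def using g h by (simp add: m_assoc)
        hence cV: "c \<in> V" using comm_in[of "inv g" "inv h"] g h by simp
        have cc: "c \<in> carrier G" using cV Vc by blast
        have gg: "g' = g \<otimes> c" unfolding c_def using g g'c by (simp add: cancel1)
        have cv: "c \<otimes> v = v \<otimes> c" using commV[OF cV vV] .
        have "v \<otimes> g' = (v \<otimes> g) \<otimes> c" using gg g vc cc by (simp add: m_assoc)
        also have "\<dots> = g \<otimes> (v \<otimes> c)" using gv g vc cc by (simp add: m_assoc)
        also have "\<dots> = g' \<otimes> v" using gg cv g vc cc by (simp add: m_assoc)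
        finally have vg': "g' \<otimes> v = v \<otimes> g'" by simp
        have hg: "h \<otimes> g' \<otimes> inv h = g" unfolding g'_def using g h by (simp add: m_assoc cancel1)
        have e0: "(h \<otimes> g' \<otimes> inv h) \<otimes> (h \<otimes> v \<otimes> inv h) = (h \<otimes> v \<otimes> inv h) \<otimes> (h \<otimes> g' \<otimes> inv h)"
          by (rule comm_conj[OF g'c vc h vg'])
        hence e: "g \<otimes> (h \<otimes> v \<otimes> inv h) = (h \<otimes> v \<otimes> inv h) \<otimes> g" unfolding hg .
        have "h \<otimes> v \<otimes> inv h \<in> V" using conjV[OF vV h] .
        moreover have "h \<otimes> v \<otimes> inv h \<in> carrier G" using h vc by simp
        ultimately show ?thesis unfolding F_def centralizer_def using e by auto
      qed
      have clsF: "conj_class G x \<subseteq> F - {\<one>}" if x: "x \<in> F" "x \<noteq> \<one>" for x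
      proof
        fix z assume z: "z \<in> conj_class G x"
        then obtain a where a: "a \<in> carrier G" and za: "z = a \<otimes> x \<otimes> inv a"
          unfolding conj_class_def by blast
        have "z \<in> F" using Finv[OF x(1) a] za by simp
        moreover have "x \<in> V" using x FV by blast
        hence "z \<in> V - {\<one>}" using cls_in[of x] x z by blast
        ultimately show "z \<in> F - {\<one>}" by blast
      qed
      have c4: "card (F - {\<one>}) = 4" using c5 oneF finF by simp
      hence "F - {\<one>} \<noteq> {}" by (intro notI) simp
      then obtain x where x: "x \<in> F" "x \<noteq> \<one>" by blast
      have xV: "x \<in> V" and xc: "x \<in> carrier G" using x FV Vc by auto
      have "card (conj_class G x) \<le> 4" using card_mono[OF finite_Diff[OF finF] clsF[OF x]] c4 by simp
      moreover have "card (conj_class G x) \<noteq> 4" using cls_odd[OF xc] by (intro notI) simp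
      ultimately have c3: "card (conj_class G x) = 3" using cls_ge3[OF xV x(2)] by linarith
      have "conj_class G x \<noteq> F - {\<one>}"
      proof
        assume "conj_class G x = F - {\<one>}"
        with c3 c4 show False by simp
      qed
      then obtain y where y: "y \<in> F - {\<one>}" "y \<notin> conj_class G x" using clsF[OF x] by blast
      have yV: "y \<in> V" and yc: "y \<in> carrier G" using y FV Vc by auto
      have disj: "conj_class G x \<inter> conj_class G y = {}" using conj_class_disj[OF xc yc y(2)] .
      have "conj_class G y \<subseteq> (F - {\<one>}) - conj_class G x" using clsF[of y] y disj by auto
      hence "card (conj_class G y) \<le> card ((F - {\<one>}) - conj_class G x)"
        using finF by (meson card_mono finite_Diff)
      also have "\<dots> = 1" using c3 c4 clsF[OF x] finF
        by (simp add: card_Diff_subset finite_subset[OF clsF[OF x]])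
      finally show False using cls_ge3[of y] yV y by auto
    qed
    ultimately have "card F = 1" by blast
    thus ?thesis using oneF finF unfolding F_def by (metis card_1_singletonE singletonD)
  qed
  have centx: "centralizer G {x} = C" if x: "x \<in> V" "x \<noteq> \<one>" for x
  proof
    show "C \<subseteq> centralizer G {x}"
      using x unfolding C_def centralizer_def by auto
    show "centralizer G {x} \<subseteq> C"
    proof
      fix g assume g: "g \<in> centralizer G {x}"
      have gc: "g \<in> carrier G" using g unfolding centralizer_def by auto
      show "g \<in> C"
      proof (rule ccontr)
        assume "g \<notin> C"
        hence "V \<inter> centralizer G {g} = {\<one>}" using key gc by blast
        moreover have "x \<in> centralizer G {g}" using g x Vc unfolding centralizer_def by auto
        ultimately show False using x by blast
      qed
    qed
  qed
  define k where "k = card (rcosets C)"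
  have lagC: "k * card C = order G" unfolding k_def using lagrange[OF hC] .
  have Cpos: "card C > 0"
  proof -
    have "\<one> \<in> C" by (rule subgroup.one_closed[OF hC])
    moreover have "finite C" by (rule finite_subset[OF subgroup.subset[OF hC] fin])
    ultimately show ?thesis by (auto simp: card_gt_0_iff)
  qed
  have clsk: "card (conj_class G x) = k" if x: "x \<in> V" "x \<noteq> \<one>" for x
  proof -
    have xc: "x \<in> carrier G" using x Vc by blast
    have "card (conj_class G x) * card C = k * card C" using cls[OF xc] centx[OF x] lagC by simp
    thus ?thesis using Cpos by simp
  qed
  define S where "S = conj_class G ` (V - {\<one>})"
  have US: "\<Union>S = V - {\<one>}"
  proof
    show "\<Union>S \<subseteq> V - {\<one>}" unfolding S_def using cls_in by blast
    show "V - {\<one>} \<subseteq> \<Union>S" unfolding S_def using self_in_conj_class Vc by blast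
  qed
  have f1: "finite S" unfolding S_def using finV by simp
  have f2: "finite (\<Union>S)" using US finV by simp
  have f3: "\<forall>c\<in>S. card c = k" unfolding S_def using clsk by blast
  have f4: "\<forall>c1\<in>S. \<forall>c2\<in>S. c1 \<noteq> c2 \<longrightarrow> c1 \<inter> c2 = {}"
    proof (intro ballI impI)
      fix c1 c2 assume c1: "c1 \<in> S" and c2: "c2 \<in> S" and ne: "c1 \<noteq> c2"
      obtain a where a: "a \<in> V - {\<one>}" "c1 = conj_class G a" using c1 unfolding S_def by blast
      obtain b where b: "b \<in> V - {\<one>}" "c2 = conj_class G b" using c2 unfolding S_def by blast
      have ac: "a \<in> carrier G" and bc: "b \<in> carrier G" using a b Vc by auto
      show "c1 \<inter> c2 = {}"
      proof (cases "b \<in> conj_class G a")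
        case True
        hence "c2 = c1" using conj_class_eq[OF ac True] a b by simp
        thus ?thesis using ne by simp
      next
        case False
        thus ?thesis using conj_class_disj[OF ac bc False] a b by simp
      qed
    qed
  have kS: "k * card S = card (\<Union>S)"
    using card_partition[of S k] f1 f2 f3 f4 by blast
  have one: "\<one> \<in> V" by (rule subgroup.one_closed[OF hV])
  have c24: "card (V - {\<one>}) = 24" using cardV finV one by simp
  have oddk: "odd k" using lagC oddG by (metis even_mult_iff)
  have "V - {\<one>} \<noteq> {}" using c24 by (intro notI) simp
  then obtain x0 where x0: "x0 \<in> V" "x0 \<noteq> \<one>" by blast
  have k2: "k \<ge> 2" using cls_ge3[OF x0] clsk[OF x0] by simp
  have "k * card S = 24" using kS US c24 by simp
  hence k3: "k = 3" using odd24[of k "card S"] oddk k2 by blast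
  show ?thesis
  proof
    show "\<forall>x\<in>derived G (carrier G) - center G. card (conj_class G x) = 3"
    proof
      fix x assume "x \<in> derived G (carrier G) - center G"
      hence x: "x \<in> V" "x \<noteq> \<one>" unfolding V_def center_def by auto
      show "card (conj_class G x) = 3" using clsk[OF x] k3 by simp
    qed
    show "order (G Mod centralizer G (derived G (carrier G))) = 3"
      using k3 unfolding k_def C_def V_def order_def FactGroup_def by simp
  qed
qed


theorem lemma4p2:
  fixes G :: "('a, 'b) monoid_scheme"
  assumes "group G"
    and "finite (carrier G)"
    and "order G mod 6 = 3"
    and "subgroup_generated G (derived G (carrier G)) \<cong> integer_mod_group 5 \<times>\<times> integer_mod_group 5"
    and "derived G (carrier G) \<inter> center G = {\<one>\<^bsub>G\<^esub>}"
  shows "(\<forall>x \<in> derived G (carrier G) - center G. card (conj_class G x) = 3)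
         \<and> order (G Mod centralizer G (derived G (carrier G))) = 3"
  by (rule group.main_aux[OF assms(1) assms(2-5)])

end
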